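(* Let $\mathcal{K}$ be a connected simplicial complex, $(Z,d_Z)$ a metric space and $F:\mathrm{vert}(\mathcal{K})\to Z$ a function. Then the $F$-induced distance $d_F$ is a path-dominated distance function.
   Context: The $F$-induced distance is $d_F(x,y)=\min_{\pi}\max_{u\in\pi}d_Z(F(x),F(u))$, the minimum over all paths $\pi$ in the $1$-skeleton of $\mathcal{K}$ from $x$ to $y$. A function $d:\mathrm{vert}(\mathcal{K})\times\mathrm{vert}(\mathcal{K})\to\mathbb{R}_{\ge0}$ is path-dominated if (i) $d(x,y)\ge0$ and $d(x,x)=0$ for all vertices, and (ii) for any vertices $x,y$ there is a path $\pi^*$ from $x$ to $y$ in the $1$-skeleton with $d(x,y)=\max_{u\in\mathrm{vert}(\pi^* )}d(x,u)$. *)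

theory Defs
  imports "HOL-Analysis.Analysis"
begin

definition simplicial_complex :: "'a set set \<Rightarrow> bool" where
  "simplicial_complex K \<longleftrightarrow>
     (\<forall>\<sigma>\<in>K. finite \<sigma> \<and> \<sigma> \<noteq> {}) \<and>
     (\<forall>\<sigma>\<in>K. \<forall>\<tau>. \<tau> \<subseteq> \<sigma> \<and> \<tau> \<noteq> {} \<longrightarrow> \<tau> \<in> K)"

definition vert :: "'a set set \<Rightarrow> 'a set" where
  "vert K = \<Union>K"

definition skel_edge :: "'a set set \<Rightarrow> 'a \<Rightarrow> 'a \<Rightarrow> bool" where
  "skel_edge K u v \<longleftrightarrow> u \<noteq> v \<and> {u, v} \<in> K"

definition skel_path :: "'a set set \<Rightarrow> 'a list \<Rightarrow> 'a \<Rightarrow> 'a \<Rightarrow> bool" where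
  "skel_path K \<pi> x y \<longleftrightarrow>
     \<pi> \<noteq> [] \<and> hd \<pi> = x \<and> last \<pi> = y \<and> set \<pi> \<subseteq> vert K \<and>
     (\<forall>i. Suc i < length \<pi> \<longrightarrow> skel_edge K (\<pi> ! i) (\<pi> ! Suc i))"

definition connected_complex :: "'a set set \<Rightarrow> bool" where
  "connected_complex K \<longleftrightarrow> (\<forall>x\<in>vert K. \<forall>y\<in>vert K. \<exists>\<pi>. skel_path K \<pi> x y)"

definition induced_dist :: "'a set set \<Rightarrow> ('a \<Rightarrow> 'b::metric_space) \<Rightarrow> 'a \<Rightarrow> 'a \<Rightarrow> real" where
  "induced_dist K F x y =
     Min {Max ((\<lambda>u. dist (F x) (F u)) ` set \<pi>) | \<pi>. skel_path K \<pi> x y}"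

definition path_dominated :: "'a set set \<Rightarrow> ('a \<Rightarrow> 'a \<Rightarrow> real) \<Rightarrow> bool" where
  "path_dominated K d \<longleftrightarrow>
     (\<forall>x\<in>vert K. \<forall>y\<in>vert K. d x y \<ge> 0) \<and> (\<forall>x\<in>vert K. d x x = 0) \<and>
     (\<forall>x\<in>vert K. \<forall>y\<in>vert K. \<exists>\<pi>. skel_path K \<pi> x y \<and>
        d x y = Max ((\<lambda>u. d x u) ` set \<pi>))"

end

theory Submission
  imports Defs
begin

lemma fin_vert: "simplicial_complex K \<Longrightarrow> finite K \<Longrightarrow> finite (vert K)"
  unfolding vert_def simplicial_complex_def by auto

lemma fin_vals:
  assumes "finite (vert K)"
  shows "finite {Max (g ` set \<pi>) | \<pi>. skel_path K \<pi> x y}"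
proof -
  have "{Max (g ` set \<pi>) | \<pi>. skel_path K \<pi> x y} \<subseteq> (\<lambda>S. Max (g ` S)) ` Pow (vert K)"
    unfolding skel_path_def by auto
  thus ?thesis using assms by (meson finite_Pow_iff finite_imageI finite_subset)
qed

lemma prefix_path:
  assumes "skel_path K \<pi> x y" "u \<in> set \<pi>"
  shows "\<exists>\<pi>'. skel_path K \<pi>' x u \<and> set \<pi>' \<subseteq> set \<pi>"
proof -
  obtain i where i: "i < length \<pi>" "\<pi> ! i = u" using assms(2) by (meson in_set_conv_nth)
  let ?p = "take (Suc i) \<pi>"
  have "skel_path K ?p x u"
    unfolding skel_path_def
  proof (intro conjI allI impI)
    show "?p \<noteq> []" using i by auto
    show "hd ?p = x" using assms(1) i unfolding skel_path_def by (simp add: hd_take)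
    have lp: "length ?p = Suc i" using i by simp
    have ne': "?p \<noteq> []" using i by auto
    have "last ?p = ?p ! (length ?p - 1)" by (rule last_conv_nth[OF ne'])
    also have "\<dots> = ?p ! i" using lp by simp
    also have "\<dots> = u" using i by simp
    finally show "last ?p = u" .
    show "set ?p \<subseteq> vert K" using assms(1) unfolding skel_path_def by (meson set_take_subset subset_trans)
    fix j assume "Suc j < length ?p"
    thus "skel_edge K (?p ! j) (?p ! Suc j)" using assms(1) i unfolding skel_path_def by auto
  qed
  moreover have "set ?p \<subseteq> set \<pi>" by (rule set_take_subset)
  ultimately show ?thesis by blast
qed

theorem claim3:
  fixes K :: "'a set set" and F :: "'a \<Rightarrow> 'b::metric_space"
  assumes "simplicial_complex K" and "finite K" and "connected_complex K"
  shows "path_dominated K (induced_dist K F)"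
proof -
  have fv: "finite (vert K)" using fin_vert assms by blast
  let ?d = "induced_dist K F"
  let ?S = "\<lambda>x y. {Max ((\<lambda>u. dist (F x) (F u)) ` set \<pi>) | \<pi>. skel_path K \<pi> x y}"
  have fS: "finite (?S x y)" for x y using fin_vals[OF fv] .
  have neS: "?S x y \<noteq> {}" if "x \<in> vert K" "y \<in> vert K" for x y
    using assms(3) that unfolding connected_complex_def by blast
  have lower: "?d x y \<ge> dist (F x) (F y)" if "x \<in> vert K" "y \<in> vert K" for x y
    unfolding induced_dist_def
  proof (subst Min_ge_iff[OF fS neS[OF that]], clarify)
    fix \<pi> assume p: "skel_path K \<pi> x y"
    hence "y \<in> set \<pi>" unfolding skel_path_def by auto
    thus "dist (F x) (F y) \<le> Max ((\<lambda>u. dist (F x) (F u)) ` set \<pi>)" by (simp add: Max_ge_iff)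
  qed
  have nonneg: "?d x y \<ge> 0" if "x \<in> vert K" "y \<in> vert K" for x y
    using lower[OF that] zero_le_dist order_trans by blast
  have zero: "?d x x = 0" if "x \<in> vert K" for x
  proof -
    have "skel_path K [x] x x" using that unfolding skel_path_def by auto
    hence "Max ((\<lambda>u. dist (F x) (F u)) ` set [x]) \<in> ?S x x" by blast
    hence "?d x x \<le> 0" unfolding induced_dist_def using fS by (simp add: Min_le)
    thus ?thesis using nonneg[OF that that] by linarith
  qed
  have dom: "\<exists>\<pi>. skel_path K \<pi> x y \<and> ?d x y = Max ((\<lambda>u. ?d x u) ` set \<pi>)"
    if xy: "x \<in> vert K" "y \<in> vert K" for x y
  proof -
    have "?d x y \<in> ?S x y" unfolding induced_dist_def using fS neS[OF xy] by (rule Min_in)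
    then obtain \<pi> where p: "skel_path K \<pi> x y"
      and m: "?d x y = Max ((\<lambda>u. dist (F x) (F u)) ` set \<pi>)" by blast
    have ne: "set \<pi> \<noteq> {}" and sv: "set \<pi> \<subseteq> vert K" and yin: "y \<in> set \<pi>"
      using p unfolding skel_path_def by auto
    have up: "?d x u \<le> ?d x y" if u: "u \<in> set \<pi>" for u
    proof -
      obtain \<pi>' where p': "skel_path K \<pi>' x u" "set \<pi>' \<subseteq> set \<pi>"
        using prefix_path[OF p u] by blast
      have "?d x u \<le> Max ((\<lambda>u. dist (F x) (F u)) ` set \<pi>')"
        unfolding induced_dist_def using fS p'(1) by (intro Min_le) blast+
      also have "\<dots> \<le> Max ((\<lambda>u. dist (F x) (F u)) ` set \<pi>)"
        using p'(1) p'(2) unfolding skel_path_def by (intro Max_mono) auto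
      finally show ?thesis using m by simp
    qed
    have "Max ((\<lambda>u. ?d x u) ` set \<pi>) = ?d x y"
    proof (rule antisym)
      show "Max ((\<lambda>u. ?d x u) ` set \<pi>) \<le> ?d x y" using up ne by (simp add: Max_le_iff)
      show "?d x y \<le> Max ((\<lambda>u. ?d x u) ` set \<pi>)" using yin by (simp add: Max_ge_iff) 
    qed
    thus ?thesis using p by metis
  qed
  show ?thesis unfolding path_dominated_def using nonneg zero dom by blast
qed

end
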